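(* Let $n\ge 1$ and $\gamma_1,\dots,\gamma_n>0$. For $i=1,\dots,n$ let $H_i$ be a system $\dot x_i=f_i(x_i,u_i)$, $y_i=h_i(x_i)$ ($x_i\in\mathbb{R}^{m_i}$, $u_i,y_i\in\mathbb{R}$) with a $C^1$ function $V_i$ satisfying $\nabla V_i(x_i)\cdot f_i(x_i,u_i)\le -h_i(x_i)^2+\gamma_iu_ih_i(x_i)$ for all $x_i,u_i$. Consider the cascade $u_1=u$ (external input $u\in\mathbb{R}$), $u_i=y_{i-1}$ for $i=2,\dots,n$, and write $y=(y_1,\dots,y_n)$. Then for every $$\delta>\gamma_1\cdots\gamma_n\cos\big(\pi/(n+1)\big)^{n+1}$$ there exist $d_1,\dots,d_n>0$ and $\epsilon>0$ such that $V=\sum_{i=1}^nd_iV_i$ satisfies, along the cascade dynamics and for all inputs $u$, $$\dot V\le-\epsilon|y|^2+\delta u^2+u\,y_n.$$ *)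

theory Defs
  imports "HOL-Analysis.Analysis"
begin

text \<open>The state space R^m of a subsystem is represented by real sequences
  vanishing from index m on (coordinates 0..m-1). The topology on nat => real
  is the product topology, which on this set is the Euclidean one.\<close>

definition Rspace :: "nat \<Rightarrow> (nat \<Rightarrow> real) set" where
  "Rspace m = {x. \<forall>j. m \<le> j \<longrightarrow> x j = 0}"

definition partial_deriv :: "((nat \<Rightarrow> real) \<Rightarrow> real) \<Rightarrow> (nat \<Rightarrow> real) \<Rightarrow> nat \<Rightarrow> real" where
  "partial_deriv V x j = deriv (\<lambda>t. V (x(j := t))) (x j)"

definition C1_on :: "nat \<Rightarrow> ((nat \<Rightarrow> real) \<Rightarrow> real) \<Rightarrow> bool" where
  "C1_on m V \<longleftrightarrow>
     (\<forall>x\<in>Rspace m. \<forall>j<m. (\<lambda>t. V (x(j := t))) differentiable (at (x j))) \<and>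
     (\<forall>j<m. continuous_on (Rspace m) (\<lambda>x. partial_deriv V x j))"

definition lie_deriv :: "nat \<Rightarrow> ((nat \<Rightarrow> real) \<Rightarrow> real) \<Rightarrow> (nat \<Rightarrow> real) \<Rightarrow> (nat \<Rightarrow> real) \<Rightarrow> real" where
  "lie_deriv m V x v = (\<Sum>j<m. partial_deriv V x j * v j)"

definition cascade_input :: "(nat \<Rightarrow> (nat \<Rightarrow> real) \<Rightarrow> real) \<Rightarrow> real \<Rightarrow> (nat \<Rightarrow> nat \<Rightarrow> real) \<Rightarrow> nat \<Rightarrow> real" where
  "cascade_input h u X i = (if i = 1 then u else h (i - 1) (X (i - 1)))"

end

theory Submission
  imports Defs
begin

lemma path_ineq:
  fixes w :: "nat \<Rightarrow> real" and \<theta> :: real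
  assumes th: "\<theta> = pi / real (n+1)" and k1: "1 \<le> k" and kn: "k \<le> n"
  shows "2 * sin (real k * \<theta>) * (cos \<theta> * (\<Sum>j\<in>{1..<k}. (w j)\<^sup>2) - (\<Sum>j\<in>{1..k}. w (j-1) * w j))
     \<ge> - (sin ((real k - 1) * \<theta>) * (w 0)\<^sup>2 + 2 * sin \<theta> * w 0 * w k + sin ((real k - 1) * \<theta>) * (w k)\<^sup>2)"
  using k1 kn
proof (induction k rule: dec_induct)
  case base
  then show ?case by simp
next
  case (step k)
  have pos: "sin (real j * \<theta>) > 0" if "1 \<le> j" "j \<le> n" for j
  proof (rule sin_gt_zero)
    have "real n + 1 > 0" by simp
    show "0 < real j * \<theta>" using that th by simp
    have "real j * \<theta> = pi * (real j / (real n + 1))" using th by (simp add: add.commute mult.commute)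
    also have "\<dots> < pi * 1" using that by (intro mult_strict_left_mono) (auto simp: field_simps)
    finally show "real j * \<theta> < pi" by simp
  qed
  define A where "A = sin (real k * \<theta>)"
  define B where "B = cos (real k * \<theta>)"
  define S where "S = sin \<theta>"
  define C where "C = cos \<theta>"
  define SS where "SS = (\<Sum>j\<in>{1..<k}. (w j)\<^sup>2)"
  define PP where "PP = (\<Sum>j\<in>{1..k}. w (j-1) * w j)"
  define x where "x = w (Suc k)"
  define y where "y = w k"
  define z where "z = w 0"
  have A0: "A > 0" unfolding A_def using step by (intro pos) auto
  have s1: "sin (real (Suc k) * \<theta>) = A * C + B * S"
    unfolding A_def B_def C_def S_def by (simp add: distrib_right sin_add)
  have s1': "sin (real (Suc k) * \<theta>) > 0" using step by (intro pos) auto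
  have sm: "sin ((real k - 1) * \<theta>) = A * C - B * S"
    unfolding A_def B_def C_def S_def by (simp add: left_diff_distrib sin_diff)
  have sk: "sin ((real (Suc k) - 1) * \<theta>) = A" unfolding A_def by simp
  have sum1: "(\<Sum>j\<in>{1..<Suc k}. (w j)\<^sup>2) = SS + y^2"
    unfolding SS_def y_def using step by (simp add: sum.atLeastLessThan_Suc)
  have sum2: "(\<Sum>j\<in>{1..Suc k}. w (j-1) * w j) = PP + y * x"
    unfolding PP_def y_def x_def by (simp add: sum.cl_ivl_Suc)
  have IH: "2 * A * (C * SS - PP) + ((A*C - B*S) * z^2 + 2 * S * z * y + (A*C - B*S) * y^2) \<ge> 0"
  proof -
    have "- (sin ((real k - 1) * \<theta>) * (w 0)\<^sup>2 + 2 * sin \<theta> * w 0 * w k + sin ((real k - 1) * \<theta>) * (w k)\<^sup>2)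
     \<le> 2 * sin (real k * \<theta>) * (cos \<theta> * (\<Sum>j\<in>{1..<k}. (w j)\<^sup>2) - (\<Sum>j\<in>{1..k}. w (j-1) * w j))"
      using step by (meson Suc_leD)
    then show ?thesis unfolding sm A_def[symmetric] C_def[symmetric] S_def[symmetric] SS_def[symmetric] PP_def[symmetric]
      z_def[symmetric] y_def[symmetric] by linarith
  qed
  have AB: "A^2 + B^2 = 1" unfolding A_def B_def by simp
  have SC: "S^2 + C^2 = 1" unfolding S_def C_def by simp
  have ident: "A * (2 * (A*C + B*S) * (C * (SS + y^2) - (PP + y * x)) + (A * z^2 + 2 * S * z * x + A * x^2))
     = (A*C + B*S) * (2 * A * (C * SS - PP) + ((A*C - B*S) * z^2 + 2 * S * z * y + (A*C - B*S) * y^2))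
       + ((A*C + B*S) * y - A * x - S * z)\<^sup>2"
    using AB SC by algebra
  have "A * (2 * (A*C + B*S) * (C * (SS + y^2) - (PP + y * x)) + (A * z^2 + 2 * S * z * x + A * x^2)) \<ge> 0"
  proof -
    have p: "A*C+B*S > 0" using s1 s1' by simp
    show ?thesis unfolding ident using p IH by (metis add_nonneg_nonneg mult_nonneg_nonneg less_imp_le zero_le_power2)
  qed
  hence "2 * (A*C + B*S) * (C * (SS + y^2) - (PP + y * x)) + (A * z^2 + 2 * S * z * x + A * x^2) \<ge> 0"
    using A0 by (simp add: zero_le_mult_iff)
  then show ?case
    unfolding sum1 sum2 s1 sk by (simp add: C_def S_def x_def z_def)
qed

lemma cyc_ineq:
  fixes w :: "nat \<Rightarrow> real"
  assumes n1: "1 \<le> n"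
  shows "(\<Sum>j\<in>{1..n}. w (j-1) * w j) - w n * w 0 \<le> cos (pi / real (n+1)) * (\<Sum>j\<in>{0..n}. (w j)\<^sup>2)"
proof -
  define \<theta> where "\<theta> = pi / real (n+1)"
  have P: "2 * sin (real n * \<theta>) * (cos \<theta> * (\<Sum>j\<in>{1..<n}. (w j)\<^sup>2) - (\<Sum>j\<in>{1..n}. w (j-1) * w j))
     \<ge> - (sin ((real n - 1) * \<theta>) * (w 0)\<^sup>2 + 2 * sin \<theta> * w 0 * w n + sin ((real n - 1) * \<theta>) * (w n)\<^sup>2)"
    using path_ineq[OF \<theta>_def n1 order_refl] .
  have e1: "real n * \<theta> = pi - \<theta>" unfolding \<theta>_def by (simp add: field_simps)
  have e2: "(real n - 1) * \<theta> = pi - 2 * \<theta>" unfolding \<theta>_def by (simp add: field_simps)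
  have sn: "sin (real n * \<theta>) = sin \<theta>" unfolding e1 by simp
  have sn1: "sin ((real n - 1) * \<theta>) = 2 * sin \<theta> * cos \<theta>" unfolding e2 by (simp add: sin_double)
  have spos: "sin \<theta> > 0" unfolding \<theta>_def using n1 by (intro sin_gt_zero) (auto simp: field_simps)
  have split: "(\<Sum>j\<in>{0..n}. (w j)\<^sup>2) = (w 0)\<^sup>2 + (\<Sum>j\<in>{1..<n}. (w j)\<^sup>2) + (w n)\<^sup>2"
  proof -
    have "{0..n} = insert 0 (insert n {1..<n})" using n1 by auto
    then show ?thesis using n1 by simp
  qed
  have "2 * sin \<theta> * (cos \<theta> * (\<Sum>j\<in>{0..n}. (w j)\<^sup>2) - ((\<Sum>j\<in>{1..n}. w (j-1) * w j) - w n * w 0)) \<ge> 0"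
    using P unfolding sn sn1 split by (simp add: algebra_simps power2_eq_square)
  hence "cos \<theta> * (\<Sum>j\<in>{0..n}. (w j)\<^sup>2) - ((\<Sum>j\<in>{1..n}. w (j-1) * w j) - w n * w 0) \<ge> 0"
    using spos by (simp add: zero_le_mult_iff)
  then show ?thesis unfolding \<theta>_def by simp
qed

theorem corollary3:
  fixes n :: nat and m :: "nat \<Rightarrow> nat" and \<gamma> :: "nat \<Rightarrow> real"
    and f :: "nat \<Rightarrow> (nat \<Rightarrow> real) \<Rightarrow> real \<Rightarrow> (nat \<Rightarrow> real)"
    and h :: "nat \<Rightarrow> (nat \<Rightarrow> real) \<Rightarrow> real"
    and V :: "nat \<Rightarrow> (nat \<Rightarrow> real) \<Rightarrow> real"
    and \<delta> :: real
  assumes "n \<ge> 1"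
    and "\<forall>i\<in>{1..n}. \<gamma> i > 0"
    and "\<forall>i\<in>{1..n}. C1_on (m i) (V i)"
    and "\<forall>i\<in>{1..n}. \<forall>x\<in>Rspace (m i). \<forall>w::real.
           lie_deriv (m i) (V i) x (f i x w) \<le> - (h i x)\<^sup>2 + \<gamma> i * w * h i x"
    and "\<delta> > (\<Prod>i=1..n. \<gamma> i) * cos (pi / real (n + 1)) ^ (n + 1)"
  shows "\<exists>d::nat \<Rightarrow> real. (\<forall>i\<in>{1..n}. d i > 0) \<and> (\<exists>\<epsilon>>0.
           \<forall>(X::nat \<Rightarrow> nat \<Rightarrow> real) (u::real). (\<forall>i\<in>{1..n}. X i \<in> Rspace (m i)) \<longrightarrow>
             (\<Sum>i=1..n. d i * lie_deriv (m i) (V i) (X i) (f i (X i) (cascade_input h u X i)))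
               \<le> - \<epsilon> * (\<Sum>i=1..n. (h i (X i))\<^sup>2) + \<delta> * u\<^sup>2 + u * h n (X n))"
  proof -
  note n1 = assms(1) and gpos = assms(2) and lie = assms(4) and dl = assms(5)
  define c where "c = cos (pi / real (n + 1))"
  define P where "P = (\<Prod>i=1..n. \<gamma> i)"
  have P0: "P > 0" unfolding P_def using gpos by (intro prod_pos) auto
  have c0: "c \<ge> 0" unfolding c_def using n1 by (intro cos_ge_zero) (auto simp: field_simps)
  have "((\<lambda>a. P * a ^ (n+1)) \<longlongrightarrow> P * c ^ (n+1)) (at_right c)"
    by (intro tendsto_intros)
  hence ev1: "\<forall>\<^sub>F a in at_right c. P * a ^ (n+1) < \<delta>"
    using dl unfolding P_def c_def by (intro order_tendstoD(2)) auto
  have "\<forall>\<^sub>F a in at_right c. c < a \<and> P * a ^ (n+1) < \<delta>"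
    using ev1 eventually_at_right_less by (rule eventually_conj[rotated])
  then obtain a where ac: "c < a" and aP: "P * a ^ (n+1) < \<delta>"
    using eventually_happens'[OF trivial_limit_at_right_real] by blast
  have a0: "a > 0" using ac c0 by linarith
  define t where "t k = a ^ k * (\<Prod>i=1..k. \<gamma> i)" for k
  have t0: "t 0 = 1" unfolding t_def by simp
  have tpos: "t k > 0" if "k \<le> n" for k
    unfolding t_def using that gpos a0 by (intro mult_pos_pos prod_pos zero_less_power) auto
  have tSuc: "t (Suc k) = a * \<gamma> (Suc k) * t k" for k
    unfolding t_def by (simp add: prod.cl_ivl_Suc)
  define C where "C = t n"
  have CP: "C = a ^ n * P" unfolding C_def t_def P_def ..
  have C0: "C > 0" unfolding C_def using tpos by simp
  have aC: "a * C < \<delta>" using aP unfolding CP by (simp add: algebra_simps)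
  define d where "d k = a * C / (t k)\<^sup>2" for k
  define T where "T = 1 + (\<Sum>k=1..n. (t k)\<^sup>2)"
  have T0: "T > 0" unfolding T_def by (simp add: add_pos_nonneg sum_nonneg)
  define \<epsilon> where "\<epsilon> = C * (a - c) / T"
  have eps0: "\<epsilon> > 0" unfolding \<epsilon>_def using C0 ac T0 by simp
  show ?thesis
  proof (intro exI[of _ d] conjI ballI exI[of _ \<epsilon>] eps0 allI impI)
    fix i assume "i \<in> {1..n}"
    then have "t i > 0" using tpos by auto
    then show "d i > 0" unfolding d_def using a0 C0 by simp
  next
    fix X :: "nat \<Rightarrow> nat \<Rightarrow> real" and u :: real
    assume X: "\<forall>i\<in>{1..n}. X i \<in> Rspace (m i)"
    define y where "y k = (if k = 0 then u else h k (X k))" for k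
    define w where "w k = y k / t k" for k
    have yw: "y k = t k * w k" if "k \<le> n" for k
      unfolding w_def using tpos[OF that] by simp
    have ci: "cascade_input h u X i = y (i - 1)" if "i \<in> {1..n}" for i
      using that unfolding cascade_input_def y_def by auto
    have step1: "(\<Sum>i=1..n. d i * lie_deriv (m i) (V i) (X i) (f i (X i) (cascade_input h u X i)))
        \<le> (\<Sum>i=1..n. d i * (- (y i)\<^sup>2 + \<gamma> i * y (i-1) * y i))"
    proof (rule sum_mono)
      fix i assume i: "i \<in> {1..n}"
      have "lie_deriv (m i) (V i) (X i) (f i (X i) (cascade_input h u X i)) \<le> - (y i)\<^sup>2 + \<gamma> i * y (i-1) * y i"
        using lie i X ci[OF i] unfolding y_def by auto
      moreover have "t i > 0" using tpos i by auto
      hence "d i > 0" unfolding d_def using a0 C0 by simp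
      ultimately show "d i * lie_deriv (m i) (V i) (X i) (f i (X i) (cascade_input h u X i))
          \<le> d i * (- (y i)\<^sup>2 + \<gamma> i * y (i-1) * y i)" by simp
    qed
    have step2: "d i * (- (y i)\<^sup>2 + \<gamma> i * y (i-1) * y i) = - a * C * (w i)\<^sup>2 + C * (w (i-1) * w i)"
      if i: "i \<in> {1..n}" for i
    proof -
      obtain j where j: "i = Suc j" using i by (cases i) auto
      have jn: "j \<le> n" "Suc j \<le> n" using i j by auto
      have tj: "t j > 0" "t (Suc j) > 0" using tpos jn by auto
      have "d i * (- (y i)\<^sup>2 + \<gamma> i * y (i-1) * y i)
          = a * C / (t (Suc j))\<^sup>2 * (- (t (Suc j) * w (Suc j))\<^sup>2 + \<gamma> (Suc j) * (t j * w j) * (t (Suc j) * w (Suc j)))"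
        unfolding d_def j using yw jn by simp
      also have "\<dots> = - a * C * (w i)\<^sup>2 + C * (w (i-1) * w i)"
      proof -
        have g: "\<gamma> (Suc j) > 0" using gpos jn by auto
        show ?thesis unfolding j tSuc using tj a0 g
          by (simp add: field_simps power2_eq_square)
      qed
      finally show ?thesis .
    qed
    have cyc: "(\<Sum>j\<in>{1..n}. w (j-1) * w j) - w n * w 0 \<le> c * (\<Sum>j\<in>{0..n}. (w j)\<^sup>2)"
      unfolding c_def by (rule cyc_ineq[OF n1])
    have split: "(\<Sum>j\<in>{0..n}. (w j)\<^sup>2) = (w 0)\<^sup>2 + (\<Sum>j\<in>{1..n}. (w j)\<^sup>2)"
      by (simp add: sum.atLeast_Suc_atMost)
    have w0: "w 0 = u" unfolding w_def y_def t0 by simp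
    have yn: "h n (X n) = C * w n" using yw[of n] n1 unfolding y_def C_def by simp
    have ysq: "(\<Sum>i=1..n. (h i (X i))\<^sup>2) = (\<Sum>i=1..n. (t i)\<^sup>2 * (w i)\<^sup>2)"
    proof (rule sum.cong)
      fix x assume x: "x \<in> {1..n}"
      hence "h x (X x) = t x * w x" using yw[of x] unfolding y_def by auto
      then show "(h x (X x))\<^sup>2 = (t x)\<^sup>2 * (w x)\<^sup>2" by (simp add: power_mult_distrib)
    qed simp
    have step3: "\<epsilon> * (\<Sum>i=1..n. (t i)\<^sup>2 * (w i)\<^sup>2) \<le> C * (a - c) * (\<Sum>i=1..n. (w i)\<^sup>2)"
    proof -
      have "\<epsilon> * (\<Sum>i=1..n. (t i)\<^sup>2 * (w i)\<^sup>2) = (\<Sum>i=1..n. (\<epsilon> * (t i)\<^sup>2) * (w i)\<^sup>2)"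
        by (simp add: sum_distrib_left mult.assoc)
      also have "\<dots> \<le> (\<Sum>i=1..n. (C * (a - c)) * (w i)\<^sup>2)"
      proof (rule sum_mono)
        fix i assume i: "i \<in> {1..n}"
        have "(t i)\<^sup>2 \<le> T" unfolding T_def
          using member_le_sum[of i "{1..n}" "\<lambda>k. (t k)\<^sup>2"] i by simp
        hence h1: "C * (a - c) * (t i)\<^sup>2 \<le> C * (a - c) * T" using C0 ac
          by (intro mult_left_mono) auto
        have "\<epsilon> * (t i)\<^sup>2 = (C * (a - c) * (t i)\<^sup>2) / T" unfolding \<epsilon>_def by simp
        also have "\<dots> \<le> C * (a - c)" using h1 T0 by (simp add: pos_divide_le_eq)
        finally have "\<epsilon> * (t i)\<^sup>2 \<le> C * (a - c)" .
        then show "(\<epsilon> * (t i)\<^sup>2) * (w i)\<^sup>2 \<le> (C * (a - c)) * (w i)\<^sup>2"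
          by (rule mult_right_mono) simp
      qed
      also have "\<dots> = C * (a - c) * (\<Sum>i=1..n. (w i)\<^sup>2)" by (simp add: sum_distrib_left)
      finally show ?thesis .
    qed
    have sumeq: "(\<Sum>i=1..n. d i * (- (y i)\<^sup>2 + \<gamma> i * y (i-1) * y i))
        = - a * C * (\<Sum>i=1..n. (w i)\<^sup>2) + C * (\<Sum>i=1..n. w (i-1) * w i)"
    proof -
      have "(\<Sum>i=1..n. d i * (- (y i)\<^sup>2 + \<gamma> i * y (i-1) * y i))
          = (\<Sum>i=1..n. - a * C * (w i)\<^sup>2 + C * (w (i-1) * w i))"
        by (rule sum.cong) (simp_all only: step2)
      also have "\<dots> = - a * C * (\<Sum>i=1..n. (w i)\<^sup>2) + C * (\<Sum>i=1..n. w (i-1) * w i)"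
        by (simp add: sum.distrib sum_distrib_left sum_subtractf sum_negf)
      finally show ?thesis .
    qed
    have cC: "c * C \<le> \<delta>" using aC ac C0 by (smt (verit) mult_right_mono)
    have "C * (\<Sum>i=1..n. w (i-1) * w i) \<le> C * (c * ((w 0)\<^sup>2 + (\<Sum>j\<in>{1..n}. (w j)\<^sup>2)) + w n * w 0)"
      using cyc C0 unfolding split by (intro mult_left_mono) auto
    moreover have "c * C * (w 0)\<^sup>2 \<le> \<delta> * (w 0)\<^sup>2" using cC by (intro mult_right_mono) auto
    ultimately show "(\<Sum>i=1..n. d i * lie_deriv (m i) (V i) (X i) (f i (X i) (cascade_input h u X i)))
               \<le> - \<epsilon> * (\<Sum>i=1..n. (h i (X i))\<^sup>2) + \<delta> * u\<^sup>2 + u * h n (X n)"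
      using step1 step3 unfolding sumeq ysq yn w0[symmetric]
      by (simp add: algebra_simps)
  qed
qed

end
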